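(* Let $\mathcal{X}\subseteq\mathbb{R}^d$ be a set such that $\operatorname{cl}\operatorname{conv}(\mathcal{X})$ is a polyhedron. Then the enhanced separation oracle (described in the context), run on any point $\bar x\in\mathbb{R}^d$, the set $\mathcal{X}$, a tolerance $\epsilon$, stored sets $V,R$, and optionally a vector $c$, terminates in a finite number of steps.
   Context: The enhanced separation oracle has access to an oracle optimizing linear functions over $\mathcal{X}$ (returning, when the maximum is finite, an optimal solution that is an extreme point (vertex) of $\operatorname{cl}\operatorname{conv}(\mathcal{X})$, and, when unbounded, an extreme ray of $\operatorname{cl}\operatorname{conv}(\mathcal{X})$ along which the objective increases). It keeps a finite set $V$ of vertices and a finite set $R$ of extreme rays of $\operatorname{cl}\operatorname{conv}(\mathcal{X})$. Procedure: (1) If $c$ is given, compute $\tilde x\in\arg\min\{c^\top x:x\in\mathcal{X}\}$ and $\bar z=c^\top\tilde x$; if $c^\top\bar x<\bar z$ return "no" and the cut $-c^\top x\le-\bar z$; if $\|\bar x-\tilde x\|<\epsilon$ return "yes" with $V=\{\bar x\}$, $\alpha=(1)$. (2) Repeat: let $\mathcal{W}=\operatorname{conv}(V)+\operatorname{cone}(R)$ and solve the linear program $\max_{\pi,\pi_0,\tau_1\ge0,\tau_2\ge0}\ \bar x^\top\pi-\pi_0$ subject to $\pi^\top v-\pi_0\le0$ for all $v\in V$, $\pi^\top r\le0$ for all $r\in R$, $\pi+\tau_1-\tau_2=0$, $\tau_1+\tau_2=1$ (componentwise/sum conventions normalizing $\|\pi\|_1=1$). If its optimal value is $0$ (up to $\epsilon$),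 i.e. $\bar x\in\mathcal{W}$, return "yes" with $(V,R)$ and the dual multipliers $\alpha,\beta$ of the vertex and ray constraints. Otherwise, with optimal $(\bar\pi,\bar\pi_0)$, solve $\max\{\bar\pi^\top x:x\in\mathcal{X}\}$: if it is unbounded, add to $R$ an extreme ray $r$ returned by the oracle; if it has an optimal solution $\nu$, then if $\bar\pi^\top\nu<\bar\pi^\top\bar x$ return "no" and the cut $\bar\pi^\top x\le\bar\pi^\top\nu$, else add $\nu$ to $V$. *)

theory Defs
  imports "HOL-Analysis.Analysis"
begin

definition rec_cone :: "('a::real_vector) set \<Rightarrow> 'a set" where
  "rec_cone C = {r. \<forall>x\<in>C. \<forall>t::real. t \<ge> 0 \<longrightarrow> x + t *\<^sub>R r \<in> C}"

definition extreme_ray_of :: "('a::real_vector) \<Rightarrow> 'a set \<Rightarrow> bool" where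
  "extreme_ray_of r C \<longleftrightarrow> r \<noteq> 0 \<and> r \<in> rec_cone C \<and>
     (\<forall>r1 r2. r1 \<in> rec_cone C \<and> r2 \<in> rec_cone C \<and> r = r1 + r2 \<longrightarrow>
        (\<exists>t\<ge>0. r1 = t *\<^sub>R r) \<and> (\<exists>t\<ge>0. r2 = t *\<^sub>R r))"

definition sep_lp_feasible ::
  "(real^'d) set \<Rightarrow> (real^'d) set \<Rightarrow> real^'d \<Rightarrow> real \<Rightarrow> real^'d \<Rightarrow> real^'d \<Rightarrow> bool" where
  "sep_lp_feasible V R p p0 t1 t2 \<longleftrightarrow>
     (\<forall>v\<in>V. p \<bullet> v - p0 \<le> 0) \<and> (\<forall>r\<in>R. p \<bullet> r \<le> 0) \<and>
     p + t1 - t2 = 0 \<and> (\<forall>i. t1 $ i \<ge> 0) \<and> (\<forall>i. t2 $ i \<ge> 0) \<and>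
     (\<Sum>i\<in>UNIV. t1 $ i + t2 $ i) = 1"

definition sep_lp_optimal ::
  "(real^'d) set \<Rightarrow> (real^'d) set \<Rightarrow> real^'d \<Rightarrow> real^'d \<Rightarrow> real \<Rightarrow> real^'d \<Rightarrow> real^'d \<Rightarrow> bool" where
  "sep_lp_optimal V R xb p p0 t1 t2 \<longleftrightarrow> sep_lp_feasible V R p p0 t1 t2 \<and>
     (\<forall>q q0 s1 s2. sep_lp_feasible V R q q0 s1 s2 \<longrightarrow> xb \<bullet> q - q0 \<le> xb \<bullet> p - p0)"

text \<open>States of the enhanced separation oracle: the start state (holding the
  initially stored V and R), the loop state with current V and R, and the
  terminated state (after returning "yes" or "no").\<close>
datatype 'a esep_state = Start "'a set" "'a set" | Iter "'a set" "'a set" | Stop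

text \<open>C = cl conv X.  The linear optimisation oracle may return any vertex
  (extreme point of C) that is optimal, or any extreme ray of C along which
  the objective increases when the problem is unbounded.\<close>
inductive esep_step ::
  "(real^'d) set \<Rightarrow> real^'d \<Rightarrow> real \<Rightarrow> (real^'d) option \<Rightarrow>
   (real^'d) esep_state \<Rightarrow> (real^'d) esep_state \<Rightarrow> bool"
  for X xb eps c where
  start_noc: "c = None \<Longrightarrow> esep_step X xb eps c (Start V R) (Iter V R)"
| start_no: "\<lbrakk>c = Some cc; xt extreme_point_of (closure (convex hull X));
     \<forall>x\<in>X. cc \<bullet> xt \<le> cc \<bullet> x; cc \<bullet> xb < cc \<bullet> xt\<rbrakk>
     \<Longrightarrow> esep_step X xb eps c (Start V R) Stop"
| start_yes: "\<lbrakk>c = Some cc; xt extreme_point_of (closure (convex hull X));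
     \<forall>x\<in>X. cc \<bullet> xt \<le> cc \<bullet> x; \<not> cc \<bullet> xb < cc \<bullet> xt; norm (xb - xt) < eps\<rbrakk>
     \<Longrightarrow> esep_step X xb eps c (Start V R) Stop"
| start_go: "\<lbrakk>c = Some cc; xt extreme_point_of (closure (convex hull X));
     \<forall>x\<in>X. cc \<bullet> xt \<le> cc \<bullet> x; \<not> cc \<bullet> xb < cc \<bullet> xt; \<not> norm (xb - xt) < eps\<rbrakk>
     \<Longrightarrow> esep_step X xb eps c (Start V R) (Iter V R)"
| iter_yes: "\<lbrakk>sep_lp_optimal V R xb p p0 t1 t2; \<bar>xb \<bullet> p - p0\<bar> \<le> eps\<rbrakk>
     \<Longrightarrow> esep_step X xb eps c (Iter V R) Stop"
| iter_ray: "\<lbrakk>sep_lp_optimal V R xb p p0 t1 t2; \<not> \<bar>xb \<bullet> p - p0\<bar> \<le> eps;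
     \<not> bdd_above ((\<lambda>x. p \<bullet> x) ` X);
     extreme_ray_of r (closure (convex hull X)); p \<bullet> r > 0\<rbrakk>
     \<Longrightarrow> esep_step X xb eps c (Iter V R) (Iter V (insert r R))"
| iter_no: "\<lbrakk>sep_lp_optimal V R xb p p0 t1 t2; \<not> \<bar>xb \<bullet> p - p0\<bar> \<le> eps;
     nu extreme_point_of (closure (convex hull X)); \<forall>x\<in>X. p \<bullet> x \<le> p \<bullet> nu;
     p \<bullet> nu < p \<bullet> xb\<rbrakk>
     \<Longrightarrow> esep_step X xb eps c (Iter V R) Stop"
| iter_add: "\<lbrakk>sep_lp_optimal V R xb p p0 t1 t2; \<not> \<bar>xb \<bullet> p - p0\<bar> \<le> eps;
     nu extreme_point_of (closure (convex hull X)); \<forall>x\<in>X. p \<bullet> x \<le> p \<bullet> nu;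
     \<not> p \<bullet> nu < p \<bullet> xb\<rbrakk>
     \<Longrightarrow> esep_step X xb eps c (Iter V R) (Iter (insert nu V) R)"

end

theory Submission
  imports Defs
begin

lemma no_ray_empty: "\<not> extreme_ray_of r ({}::'a::real_vector set)"
proof
  assume h: "extreme_ray_of r ({}::'a set)"
  have "rec_cone ({}::'a set) = UNIV" by (simp add: rec_cone_def)
  with h have "\<exists>t\<ge>0. - r = t *\<^sub>R r" unfolding extreme_ray_of_def
    by (metis UNIV_I add.commute diff_add_cancel diff_minus_eq_add)
  then obtain t where t: "t \<ge> 0" "- r = t *\<^sub>R r" by auto
  then have "(t + 1) *\<^sub>R r = - r + r" by (simp add: scaleR_add_left)
  then have "(t + 1) *\<^sub>R r = 0" by simp
  with t h show False by (simp add: extreme_ray_of_def)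
qed

lemma rec_cone_poly:
  fixes C :: "'a::real_inner set"
  assumes C: "C = {x. \<forall>h\<in>F. a h \<bullet> x \<le> b h}" and ne: "x0 \<in> C"
  shows "v \<in> rec_cone C \<longleftrightarrow> (\<forall>h\<in>F. a h \<bullet> v \<le> 0)"
proof
  assume v: "v \<in> rec_cone C"
  show "\<forall>h\<in>F. a h \<bullet> v \<le> 0"
  proof (intro ballI, rule ccontr)
    fix h assume h: "h \<in> F" "\<not> a h \<bullet> v \<le> 0"
    define t where "t = (\<bar>b h - a h \<bullet> x0\<bar> + 1) / (a h \<bullet> v)"
    have tp: "t \<ge> 0" using h by (simp add: t_def)
    have "x0 + t *\<^sub>R v \<in> C" using v ne tp by (simp add: rec_cone_def)
    then have "a h \<bullet> x0 + t * (a h \<bullet> v) \<le> b h" using h C by (auto simp: inner_add_right)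
    moreover have "t * (a h \<bullet> v) = \<bar>b h - a h \<bullet> x0\<bar> + 1" using h by (simp add: t_def)
    ultimately show False by linarith
  qed
next
  assume v: "\<forall>h\<in>F. a h \<bullet> v \<le> 0"
  show "v \<in> rec_cone C" unfolding rec_cone_def
  proof (intro CollectI ballI allI impI)
    fix x and t :: real assume x: "x \<in> C" and t: "t \<ge> 0"
    have "a h \<bullet> (x + t *\<^sub>R v) \<le> b h" if "h \<in> F" for h
    proof -
      have "t * (a h \<bullet> v) \<le> 0" using v that t by (simp add: mult_nonneg_nonpos)
      moreover have "a h \<bullet> x \<le> b h" using x that C by auto
      ultimately show ?thesis by (simp add: inner_add_right)
    qed
    then show "x + t *\<^sub>R v \<in> C" using C by auto
  qed
qed

lemma ray_key:
  fixes C :: "'a::real_inner set"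
  assumes F: "finite F" and C: "C = {x. \<forall>h\<in>F. a h \<bullet> x \<le> b h}"
    and r: "extreme_ray_of r C" and r': "extreme_ray_of r' C"
    and act: "{h\<in>F. a h \<bullet> r = 0} = {h\<in>F. a h \<bullet> r' = 0}"
  shows "\<exists>t>0. r' = t *\<^sub>R r"
proof -
  have "C \<noteq> {}" using r no_ray_empty by blast
  then obtain x0 where x0: "x0 \<in> C" by auto
  note rc = rec_cone_poly[OF C x0]
  have rn: "\<forall>h\<in>F. a h \<bullet> r \<le> 0" using r rc by (simp add: extreme_ray_of_def)
  have rn': "\<forall>h\<in>F. a h \<bullet> r' \<le> 0" using r' rc by (simp add: extreme_ray_of_def)
  have ev: "\<forall>h\<in>F. eventually (\<lambda>d. a h \<bullet> r - d * (a h \<bullet> r') \<le> 0) (at_right (0::real))"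
  proof
    fix h assume h: "h \<in> F"
    show "eventually (\<lambda>d. a h \<bullet> r - d * (a h \<bullet> r') \<le> 0) (at_right (0::real))"
    proof (cases "a h \<bullet> r = 0")
      case True
      then have "a h \<bullet> r' = 0" using act h by blast
      with True show ?thesis by simp
    next
      case False
      then have neg: "a h \<bullet> r < 0" using rn h by force
      have "((\<lambda>d. a h \<bullet> r - d * (a h \<bullet> r')) \<longlongrightarrow> a h \<bullet> r - 0 * (a h \<bullet> r')) (at_right 0)"
        by (intro tendsto_intros)
      then have "((\<lambda>d. a h \<bullet> r - d * (a h \<bullet> r')) \<longlongrightarrow> a h \<bullet> r) (at_right 0)" by simp
      from order_tendstoD(2)[OF this, of 0] neg show ?thesis
        by (auto elim: eventually_mono)
    qed
  qed
  have "eventually (\<lambda>d. (\<forall>h\<in>F. a h \<bullet> r - d * (a h \<bullet> r') \<le> 0) \<and> 0 < d) (at_right (0::real))"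
    using eventually_ball_finite[OF F ev] eventually_at_right_less[of "0::real"]
    by (rule eventually_conj)
  then obtain d :: real where d: "\<forall>h\<in>F. a h \<bullet> r - d * (a h \<bullet> r') \<le> 0" "0 < d"
    using eventually_happens' trivial_limit_at_right_real by blast
  have m1: "r - d *\<^sub>R r' \<in> rec_cone C" using d rc by (simp add: inner_diff_right)
  have m2: "d *\<^sub>R r' \<in> rec_cone C" using rc rn' d(2) by (simp add: mult_nonneg_nonpos)
  have "r = (r - d *\<^sub>R r') + d *\<^sub>R r'" by simp
  then have "\<exists>t\<ge>0. d *\<^sub>R r' = t *\<^sub>R r" using r m1 m2 unfolding extreme_ray_of_def by blast
  then obtain t where t: "t \<ge> 0" "d *\<^sub>R r' = t *\<^sub>R r" by auto
  have "t \<noteq> 0" using t d(2) r' by (auto simp: extreme_ray_of_def)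
  then have "r' = (t / d) *\<^sub>R r" using t d(2)
  proof -
    have "r' = (1/d) *\<^sub>R (d *\<^sub>R r')" using d(2) by simp
    also have "\<dots> = (t / d) *\<^sub>R r" using t(2) by simp
    finally show ?thesis .
  qed
  moreover have "t / d > 0" using t \<open>t \<noteq> 0\<close> d(2) by auto
  ultimately show ?thesis by blast
qed


lemma lp_nonneg:
  fixes xb :: "real^'d"
  assumes "sep_lp_optimal V R xb p p0 t1 t2"
  shows "xb \<bullet> p - p0 \<ge> 0"
proof -
  define s :: "real^'d" where "s = (\<chi> i. 1 / (2 * real CARD('d)))"
  have "(\<Sum>i\<in>UNIV. s $ i + s $ i) = real CARD('d) * (1 / real CARD('d))"
    by (simp add: s_def)
  also have "\<dots> = 1" by simp
  finally have "sep_lp_feasible V R 0 0 s s"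
    by (simp add: sep_lp_feasible_def s_def)
  then show ?thesis using assms unfolding sep_lp_optimal_def by fastforce
qed

lemma step_not_start: "esep_step X xb eps c s (Start V R) \<Longrightarrow> False"
  by (cases rule: esep_step.cases) auto

lemma step_not_stop: "esep_step X xb eps c Stop s \<Longrightarrow> False"
  by (cases rule: esep_step.cases) auto

lemma iter_step:
  fixes X :: "(real^'d) set"
  assumes st: "esep_step X xb eps c (Iter V R) s" and eps: "eps > 0"
  shows "s = Stop \<or>
    (\<exists>nu. s = Iter (insert nu V) R \<and> nu \<notin> V \<and> nu extreme_point_of (closure (convex hull X))) \<or>
    (\<exists>r. s = Iter V (insert r R) \<and> extreme_ray_of r (closure (convex hull X)) \<and>
        (\<forall>r'\<in>R. \<forall>t>0. r \<noteq> t *\<^sub>R r'))"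
  using st
proof (cases rule: esep_step.cases)
  case (iter_ray p p0 t1 t2 r)
  have "\<forall>r'\<in>R. \<forall>t>0. r \<noteq> t *\<^sub>R r'"
  proof (intro ballI allI impI notI)
    fix r' and t :: real assume r': "r' \<in> R" and t: "t > 0" and e: "r = t *\<^sub>R r'"
    have "p \<bullet> r' \<le> 0" using iter_ray(2) r' by (simp add: sep_lp_optimal_def sep_lp_feasible_def)
    then have "p \<bullet> r \<le> 0" using e t by (simp add: mult_nonneg_nonpos)
    then show False using iter_ray(6) by simp
  qed
  then show ?thesis using iter_ray(1,5) by (intro disjI2 exI[of _ r]) simp
next
  case (iter_add p p0 t1 t2 nu)
  have "xb \<bullet> p - p0 \<ge> 0" using lp_nonneg iter_add(2) by blast
  then have "xb \<bullet> p > p0" using iter_add(3) eps by linarith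
  then have "nu \<notin> V" using iter_add(2,6)
    by (auto simp: sep_lp_optimal_def sep_lp_feasible_def inner_commute)
  then show ?thesis using iter_add(1,4) by (intro disjI2 disjI1 exI[of _ nu]) simp
qed auto

theorem theorem3:
  fixes X :: "(real^'d) set" and xb :: "real^'d" and eps :: real
    and c :: "(real^'d) option" and V R :: "(real^'d) set"
  assumes "polyhedron (closure (convex hull X))"
    and "eps > 0"
    and "finite V" and "finite R"
  shows "\<not> (\<exists>f. f 0 = Start V R \<and> (\<forall>n. esep_step X xb eps c (f n) (f (Suc n))))"
proof
  define C where "C = closure (convex hull X)"
  assume "\<exists>f. f 0 = Start V R \<and> (\<forall>n. esep_step X xb eps c (f n) (f (Suc n)))"
  then obtain f where f0: "f 0 = Start V R" and fs: "\<And>n. esep_step X xb eps c (f n) (f (Suc n))"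
    by blast
  obtain F where F: "finite F" "C = \<Inter>F" "\<forall>h\<in>F. \<exists>a b. a \<noteq> 0 \<and> h = {x. a \<bullet> x \<le> b}"
    using assms(1) unfolding polyhedron_def C_def by blast
  then obtain a b where ab: "\<forall>h\<in>F. h = {x. a h \<bullet> x \<le> b h}" by metis
  have Ceq: "C = {x. \<forall>h\<in>F. a h \<bullet> x \<le> b h}" using F(2) ab by auto
  define E where "E = {v. v extreme_point_of C}"
  have finE: "finite E" unfolding E_def C_def using assms(1) finite_polyhedron_extreme_points by blast
  define ER where "ER = {r. extreme_ray_of r C}"
  define act where "act r = {h\<in>F. a h \<bullet> r = 0}" for r :: "real^'d"
  define phi where "phi V' R' = card (V' \<inter> E) + card (act ` (R' \<inter> ER))" for V' R'
  define B where "B = card E + card (Pow F)"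
  have finA: "finite (act ` (R' \<inter> ER))" for R'
    by (rule finite_subset[of _ "Pow F"]) (auto simp: act_def F(1))
  have phiB: "phi V' R' \<le> B" for V' R'
  proof -
    have "card (V' \<inter> E) \<le> card E" using finE by (simp add: card_mono)
    moreover have "card (act ` (R' \<inter> ER)) \<le> card (Pow F)"
      by (rule card_mono) (auto simp: act_def F(1))
    ultimately show ?thesis by (simp add: phi_def B_def)
  qed
  have isIter: "\<exists>V' R'. f (Suc n) = Iter V' R'" for n
  proof (cases "f (Suc n)")
    case (Start x y) then show ?thesis using fs[of n] step_not_start by metis
  next
    case Stop then show ?thesis using fs[of "Suc n"] step_not_stop by metis
  qed auto
  then obtain Vs Rs where VR: "\<And>n. f (Suc n) = Iter (Vs n) (Rs n)" by metis
  have inc: "phi (Vs (Suc n)) (Rs (Suc n)) > phi (Vs n) (Rs n)" for n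
  proof -
    have st: "esep_step X xb eps c (Iter (Vs n) (Rs n)) (Iter (Vs (Suc n)) (Rs (Suc n)))"
      using fs[of "Suc n"] VR by metis
    from iter_step[OF st assms(2)] show ?thesis
    proof (elim disjE exE conjE)
      assume "Iter (Vs (Suc n)) (Rs (Suc n)) = Stop" then show ?thesis by simp
    next
      fix nu assume e: "Iter (Vs (Suc n)) (Rs (Suc n)) = Iter (insert nu (Vs n)) (Rs n)"
        and nu: "nu \<notin> Vs n" "nu extreme_point_of closure (convex hull X)"
      have "nu \<in> E" using nu by (simp add: E_def C_def)
      then have "insert nu (Vs n) \<inter> E = insert nu (Vs n \<inter> E)" by auto
      then have "card (insert nu (Vs n) \<inter> E) = Suc (card (Vs n \<inter> E))"
        using nu finE by simp
      then show ?thesis using e by (simp add: phi_def)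
    next
      fix r assume e: "Iter (Vs (Suc n)) (Rs (Suc n)) = Iter (Vs n) (insert r (Rs n))"
        and r: "extreme_ray_of r (closure (convex hull X))"
        and nr: "\<forall>r'\<in>Rs n. \<forall>t>0. r \<noteq> t *\<^sub>R r'"
      have rER: "r \<in> ER" using r by (simp add: ER_def C_def)
      have "act r \<notin> act ` (Rs n \<inter> ER)"
      proof
        assume "act r \<in> act ` (Rs n \<inter> ER)"
        then obtain r' where r': "r' \<in> Rs n" "r' \<in> ER" "act r = act r'" by auto
        have "\<exists>t>0. r = t *\<^sub>R r'"
          by (rule ray_key[OF F(1) Ceq]) (use r' rER in \<open>auto simp: ER_def act_def\<close>)
        then show False using nr r'(1) by blast
      qed
      moreover have "act ` (insert r (Rs n) \<inter> ER) = insert (act r) (act ` (Rs n \<inter> ER))"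
        using rER by auto
      ultimately have "card (act ` (insert r (Rs n) \<inter> ER)) = Suc (card (act ` (Rs n \<inter> ER)))"
        using finA by simp
      then show ?thesis using e by (simp add: phi_def)
    qed
  qed
  have "phi (Vs n) (Rs n) \<ge> n" for n
    by (induction n) (use inc in \<open>auto simp: Suc_le_eq intro: le_less_trans\<close>)
  then show False using phiB[of "Vs (Suc B)" "Rs (Suc B)"] by (metis not_less_eq_eq order_refl le_trans)
qed

end
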